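(* Let $m \geq 1$ be an integer. Let $J$ be a $7\times 7$ Jacobi matrix that realizes perfect state transfer and whose spectrum is $\{0, \pm(2m+1), \pm(2m+2), \pm(2m+3)\}$. Then $J$ exhibits early state exclusion exactly $2m$ times, i.e., if $T>0$ is the earliest time at which $J$ realizes perfect state transfer, there are exactly $2m$ distinct times $\tau\in(0,T)$ with $\langle e^{-iJ\tau}\mathbf{e}_0,\mathbf{e}_0\rangle=0$.
   Context: A Jacobi matrix of order $N+1$ is a real symmetric tridiagonal matrix $J$ with diagonal entries $a_1,\dots,a_{N+1}\in\mathbb{R}$ and off-diagonal entries $b_1,\dots,b_N>0$ (so $J_{i,i}=a_i$, $J_{i,i+1}=J_{i+1,i}=b_i$, all other entries zero). Let $\{\mathbf{e}_k\}_{k=0}^{N}$ be the canonical basis of $\mathbb{C}^{N+1}$, with $\mathbf{e}_0=[1,0,\dots,0]^\top$ and $\mathbf{e}_N=[0,\dots,0,1]^\top$, and let $\langle\cdot,\cdot\rangle$ be the standard inner product on $\mathbb{C}^{N+1}$. $J$ realizes perfect state transfer (PST) at time $T>0$ if $e^{-iJT}\mathbf{e}_0 = e^{i\phi}\mathbf{e}_N$ for some $\phi\in\mathbb{R}$; "$J$ realizes PST" means this holds for some $T>0$. If $J$ realizes PST and $T>0$ is the earliest time at which it does, then $J$ exhibits early state exclusion (ESE) at time $\tau$ if $\tau\in(0,T)$ and $\langle e^{-iJ\tau}\mathbf{e}_0,\mathbf{e}_0\rangle = 0$. Here $N+1=7$. *)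

theory Defs
  imports "Jordan_Normal_Form.Spectral_Radius"
begin

definition jacobi_matrix :: "nat \<Rightarrow> real mat \<Rightarrow> bool" where
  "jacobi_matrix n J \<longleftrightarrow> J \<in> carrier_mat n n \<and>
     (\<forall>i j. i < n \<longrightarrow> j < n \<longrightarrow> J $$ (i,j) = J $$ (j,i)) \<and>
     (\<forall>i. i + 1 < n \<longrightarrow> J $$ (i, i+1) > 0) \<and>
     (\<forall>i j. i < n \<longrightarrow> j < n \<longrightarrow> i + 1 < j \<longrightarrow> J $$ (i,j) = 0)"

text \<open>The i-th entry of the vector exp(-i J t) e_0, with the matrix exponential
  given by its (entrywise convergent) power series.\<close>
definition evol :: "real mat \<Rightarrow> real \<Rightarrow> nat \<Rightarrow> complex" where
  "evol J t i = (\<Sum>k. ((- \<i> * complex_of_real t) ^ k / of_nat (fact k)) *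
                      ((map_mat complex_of_real J) ^\<^sub>m k) $$ (i, 0))"

definition pst_at :: "nat \<Rightarrow> real mat \<Rightarrow> real \<Rightarrow> bool" where
  "pst_at n J T \<longleftrightarrow> T > 0 \<and> (\<exists>\<phi>::real. \<forall>i<n.
      evol J T i = exp (\<i> * complex_of_real \<phi>) * (if i = n - 1 then 1 else 0))"

definition realizes_pst :: "nat \<Rightarrow> real mat \<Rightarrow> bool" where
  "realizes_pst n J \<longleftrightarrow> (\<exists>T. pst_at n J T)"

definition earliest_pst_time :: "nat \<Rightarrow> real mat \<Rightarrow> real \<Rightarrow> bool" where
  "earliest_pst_time n J T \<longleftrightarrow> pst_at n J T \<and> (\<forall>t. 0 < t \<and> t < T \<longrightarrow> \<not> pst_at n J t)"

text \<open>Inner product of exp(-iJ tau) e_0 with e_0 is its 0-th entry.\<close>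
definition ese_times :: "nat \<Rightarrow> real mat \<Rightarrow> real \<Rightarrow> real set" where
  "ese_times n J T = {\<tau>. 0 < \<tau> \<and> \<tau> < T \<and> evol J \<tau> 0 = 0}"

end

theory Submission
  imports Defs "HOL-Computational_Algebra.Polynomial"
begin

locale spec7 =
  fixes J :: "real mat" and lam :: "nat \<Rightarrow> real" and v :: "nat \<Rightarrow> real vec"
  assumes carr: "J \<in> carrier_mat 7 7"
    and sym: "\<And>i j. i < 7 \<Longrightarrow> j < 7 \<Longrightarrow> J $$ (i,j) = J $$ (j,i)"
    and eig: "\<And>j. j < 7 \<Longrightarrow> eigenvector J (v j) (lam j)"
    and dist: "\<And>j k. j < 7 \<Longrightarrow> k < 7 \<Longrightarrow> j \<noteq> k \<Longrightarrow> lam j \<noteq> lam k"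
begin

definition nv :: "nat \<Rightarrow> real" where "nv j = (\<Sum>i<7. (v j $ i)^2)"

lemma vdim: "j < 7 \<Longrightarrow> dim_vec (v j) = 7"
  using eig[of j] carr unfolding eigenvector_def by auto

lemma eig_eq: assumes "j < 7" "i < 7"
  shows "(\<Sum>l<7. J $$ (i,l) * v j $ l) = lam j * v j $ i"
proof -
  have "J *\<^sub>v v j = lam j \<cdot>\<^sub>v v j" using eig[OF assms(1)] unfolding eigenvector_def by auto
  hence "(J *\<^sub>v v j) $ i = (lam j \<cdot>\<^sub>v v j) $ i" by simp
  thus ?thesis using assms carr vdim[OF assms(1)]
    by (simp add: scalar_prod_def atLeast0LessThan mult.commute)
qed

lemma nv_pos: assumes "j < 7" shows "nv j > 0"
proof -
  have ne: "v j \<noteq> 0\<^sub>v 7" using eig[OF assms] carr unfolding eigenvector_def by auto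
  then obtain i where i: "i < 7" "v j $ i \<noteq> 0" using vdim[OF assms] by (auto simp: vec_eq_iff)
  have "(v j $ i)^2 \<le> nv j" unfolding nv_def
    by (rule member_le_sum) (use i in auto)
  moreover have "(v j $ i)^2 > 0" using i by simp
  ultimately show ?thesis by linarith
qed


lemma orth: assumes "j < 7" "k < 7" "j \<noteq> k"
  shows "(\<Sum>i<7. v j $ i * v k $ i) = 0"
proof -
  have "lam j * (\<Sum>i<7. v j $ i * v k $ i) = (\<Sum>i<7. (\<Sum>l<7. J $$ (i,l) * v j $ l) * v k $ i)"
    by (simp add: eig_eq assms sum_distrib_left mult.assoc)
  also have "\<dots> = (\<Sum>i<7. \<Sum>l<7. v j $ l * (J $$ (l,i) * v k $ i))"
    by (rule sum.cong[OF refl], simp add: sum_distrib_right sum_distrib_left sym mult_ac)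
  also have "\<dots> = (\<Sum>l<7. \<Sum>i<7. v j $ l * (J $$ (l,i) * v k $ i))"
    by (rule sum.swap)
  also have "\<dots> = (\<Sum>l<7. v j $ l * (\<Sum>i<7. J $$ (l,i) * v k $ i))"
    by (simp add: sum_distrib_left)
  also have "\<dots> = (\<Sum>l<7. v j $ l * (lam k * v k $ l))"
    by (rule sum.cong[OF refl]) (simp add: eig_eq assms)
  also have "\<dots> = lam k * (\<Sum>i<7. v j $ i * v k $ i)"
    by (simp add: sum_distrib_left mult_ac)
  finally show ?thesis using dist[OF assms] by auto
qed


lemma nv_alt: "j < 7 \<Longrightarrow> (\<Sum>i<7. v j $ i * v j $ i) = nv j"
  unfolding nv_def by (simp add: power2_eq_square)

lemma complete: assumes "i < 7" "l < 7"
  shows "(\<Sum>j<7. v j $ i * v j $ l / nv j) = (if i = l then 1 else 0)"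
proof -
  define V where "V = mat 7 7 (\<lambda>(i,j). v j $ i)"
  define W where "W = mat 7 7 (\<lambda>(j,l). v j $ l / nv j)"
  have V: "V \<in> carrier_mat 7 7" and W: "W \<in> carrier_mat 7 7" unfolding V_def W_def by auto
  have "W * V = 1\<^sub>m 7"
  proof (rule eq_matI)
    fix j k assume jk: "j < dim_row (1\<^sub>m 7 :: real mat)" "k < dim_col (1\<^sub>m 7 :: real mat)"
    hence jk': "j < 7" "k < 7" by auto
    have "(W * V) $$ (j,k) = (\<Sum>l<7. v j $ l / nv j * v k $ l)"
      using jk' unfolding V_def W_def by (simp add: scalar_prod_def atLeast0LessThan)
    also have "\<dots> = (\<Sum>l<7. v j $ l * v k $ l) / nv j"
      by (simp add: sum_divide_distrib)
    also have "\<dots> = (if j = k then 1 else 0)"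
      using orth[OF jk'] nv_alt[OF jk'(1)] nv_pos[OF jk'(1)] by auto
    finally show "(W * V) $$ (j,k) = 1\<^sub>m 7 $$ (j,k)" using jk' by simp
  qed (auto simp: V_def W_def)
  hence VW: "V * W = 1\<^sub>m 7" using mat_mult_left_right_inverse[OF W V] by simp
  have "(V * W) $$ (i,l) = (\<Sum>j<7. v j $ i * (v j $ l / nv j))"
    using assms unfolding V_def W_def by (simp add: scalar_prod_def atLeast0LessThan)
  thus ?thesis using VW assms by simp
qed

lemma power: assumes "i < 7" "l < 7"
  shows "(J ^\<^sub>m k) $$ (i,l) = (\<Sum>j<7. v j $ i * v j $ l / nv j * lam j ^ k)"
  using assms
proof (induction k arbitrary: i l)
  case 0
  then show ?case using carr complete[OF 0] by simp
next
  case (Suc k)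
  have "(J ^\<^sub>m Suc k) $$ (i,l) = (\<Sum>p<7. (J ^\<^sub>m k) $$ (i,p) * J $$ (p,l))"
    using Suc.prems carr by (simp add: scalar_prod_def atLeast0LessThan)
  also have "\<dots> = (\<Sum>p<7. \<Sum>j<7. v j $ i / nv j * lam j ^ k * (v j $ p * J $$ (l,p)))"
    using Suc.prems by (intro sum.cong refl) (simp add: Suc.IH sum_distrib_right sum_distrib_left sym mult_ac)
  also have "\<dots> = (\<Sum>j<7. \<Sum>p<7. v j $ i / nv j * lam j ^ k * (v j $ p * J $$ (l,p)))"
    by (rule sum.swap)
  also have "\<dots> = (\<Sum>j<7. v j $ i / nv j * lam j ^ k * (\<Sum>p<7. J $$ (l,p) * v j $ p))"
    by (simp add: sum_distrib_left mult_ac)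
  also have "\<dots> = (\<Sum>j<7. v j $ i / nv j * lam j ^ k * (lam j * v j $ l))"
    using Suc.prems by (intro sum.cong refl) (simp add: eig_eq)
  finally show ?case by (simp add: mult_ac)
qed


lemma exp_sums_c: "(\<lambda>n. (z::complex)^n / of_nat (fact n)) sums exp z"
proof -
  have "(\<lambda>n. z^n /\<^sub>R fact n) sums exp z" by (rule exp_converges)
  moreover have "(\<lambda>n. z^n /\<^sub>R fact n) = (\<lambda>n. z^n / of_nat (fact n))"
    by (rule ext) (simp add: scaleR_conv_of_real divide_inverse mult.commute)
  ultimately show ?thesis by simp
qed

lemma evol_formula: assumes "i < 7"
  shows "evol J t i = (\<Sum>j<7. complex_of_real (v j $ i * v j $ 0 / nv j) * exp (- \<i> * complex_of_real (lam j * t)))"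
proof -
  have tm: "((- \<i> * complex_of_real t) ^ k / of_nat (fact k)) *
                      ((map_mat complex_of_real J) ^\<^sub>m k) $$ (i, 0) =
     (\<Sum>j<7. complex_of_real (v j $ i * v j $ 0 / nv j) * ((- \<i> * complex_of_real (lam j * t))^k / of_nat (fact k)))" for k
  proof -
    have "(map_mat complex_of_real J) ^\<^sub>m k = map_mat complex_of_real (J ^\<^sub>m k)"
      using of_real_hom.mat_hom_pow[OF carr, of k] by (simp only: eq_commute)
    hence "((map_mat complex_of_real J) ^\<^sub>m k) $$ (i, 0) = complex_of_real ((J ^\<^sub>m k) $$ (i,0))"
      using assms carr by simp
    also have "\<dots> = (\<Sum>j<7. complex_of_real (v j $ i * v j $ 0 / nv j) * complex_of_real (lam j) ^ k)"
      using power[OF assms, of 0 k] by simp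
    finally have e: "((map_mat complex_of_real J) ^\<^sub>m k) $$ (i, 0) = (\<Sum>j<7. complex_of_real (v j $ i * v j $ 0 / nv j) * complex_of_real (lam j) ^ k)" .
    have pw: "(- \<i> * complex_of_real (lam j * t))^k = (- \<i> * complex_of_real t)^k * complex_of_real (lam j)^k" for j
    proof -
      have "(- \<i> * complex_of_real (lam j * t)) = (- \<i> * complex_of_real t) * complex_of_real (lam j)"
        by (simp add: mult_ac)
      thus ?thesis by (simp only: power_mult_distrib)
    qed
    show ?thesis unfolding e pw
      by (simp add: sum_distrib_left sum_divide_distrib mult_ac)
  qed
  have "(\<lambda>k. \<Sum>j<7. complex_of_real (v j $ i * v j $ 0 / nv j) * ((- \<i> * complex_of_real (lam j * t))^k / of_nat (fact k)))
        sums (\<Sum>j<7. complex_of_real (v j $ i * v j $ 0 / nv j) * exp (- \<i> * complex_of_real (lam j * t)))"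
    by (intro sums_sum sums_mult exp_sums_c)
  hence "(\<lambda>k. ((- \<i> * complex_of_real t) ^ k / of_nat (fact k)) *
                      ((map_mat complex_of_real J) ^\<^sub>m k) $$ (i, 0)) sums
      (\<Sum>j<7. complex_of_real (v j $ i * v j $ 0 / nv j) * exp (- \<i> * complex_of_real (lam j * t)))"
    by (simp only: tm)
  thus ?thesis unfolding evol_def by (rule sums_unique[symmetric])
qed

end

lemma sum7: "(\<Sum>i<7. (f::nat\<Rightarrow>'a::comm_monoid_add) i) = f 0 + f 1 + f 2 + f 3 + f 4 + f 5 + f 6"
  by (simp add: eval_nat_numeral ac_simps)

lemma band: assumes "jacobi_matrix 7 J" "i < 7" "l < 7" "l + k < i"
  shows "(J ^\<^sub>m k) $$ (i,l) = 0"
  using assms(2-4)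
proof (induction k arbitrary: i l)
  case 0
  then show ?case using assms(1) unfolding jacobi_matrix_def by auto
next
  case (Suc k)
  have carr: "J \<in> carrier_mat 7 7" using assms(1) unfolding jacobi_matrix_def by auto
  have "(J ^\<^sub>m Suc k) $$ (i,l) = (\<Sum>p<7. (J ^\<^sub>m k) $$ (i,p) * J $$ (p,l))"
    using Suc.prems carr by (simp add: scalar_prod_def atLeast0LessThan)
  also have "\<dots> = 0"
  proof (rule sum.neutral, intro ballI)
    fix p :: nat assume p: "p \<in> {..<7}"
    show "(J ^\<^sub>m k) $$ (i,p) * J $$ (p,l) = 0"
    proof (cases "p + k < i")
      case True
      then show ?thesis using Suc.IH[of i p] Suc.prems p by auto
    next
      case False
      hence "l + 1 < p" using Suc.prems by auto
      hence "J $$ (l,p) = 0" using assms(1) p Suc.prems unfolding jacobi_matrix_def by auto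
      moreover have "J $$ (p,l) = J $$ (l,p)" using assms(1) p Suc.prems unfolding jacobi_matrix_def by auto
      ultimately show ?thesis by simp
    qed
  qed
  finally show ?case .
qed

lemma van5:
  fixes y x :: "nat \<Rightarrow> real"
  assumes "\<And>k. k < 6 \<Longrightarrow> (\<Sum>i<7. y i * x i ^ k) = 0"
  shows "(\<Sum>i<7. y i * ((x i - z1) * (x i - z2) * (x i - z3) * (x i - z4) * (x i - z5))) = 0"
proof -
  define p where "p = [:-z1,1:] * [:-z2,1:] * [:-z3,1:] * [:-z4,1:] * [:-z5,1:]"
  have dp: "degree p \<le> 5" unfolding p_def by (simp add: degree_mult_eq)
  have pe: "poly p t = (t - z1) * (t - z2) * (t - z3) * (t - z4) * (t - z5)" for t
    unfolding p_def by (simp add: algebra_simps)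
  have "(\<Sum>i<7. y i * poly p (x i)) = (\<Sum>i<7. \<Sum>k\<le>degree p. coeff p k * (y i * x i ^ k))"
    by (simp add: poly_altdef sum_distrib_left mult_ac)
  also have "\<dots> = (\<Sum>k\<le>degree p. coeff p k * (\<Sum>i<7. y i * x i ^ k))"
    by (subst sum.swap) (simp add: sum_distrib_left)
  also have "\<dots> = 0" using assms dp by (intro sum.neutral) auto
  finally show ?thesis by (simp add: pe)
qed

definition lamf :: "nat \<Rightarrow> nat \<Rightarrow> real" where
  "lamf m j = (if j = 0 then 0 else if j = 1 then real (2*m+1) else if j = 2 then - real (2*m+1)
     else if j = 3 then real (2*m+2) else if j = 4 then - real (2*m+2)
     else if j = 5 then real (2*m+3) else - real (2*m+3))"

definition Sf :: "nat \<Rightarrow> nat \<Rightarrow> real" where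
  "Sf m j = (if j = 0 then 1 else if j \<le> 2 then (- ((2*real m+2) * (2*real m+3)^2) / (8 * (4*real m+3))) else if j \<le> 4 then ((2*real m+1)^2 * (2*real m+3)^2 / (2 * (4*real m+3) * (4*real m+5))) else (- ((2*real m+1)^2 * (2*real m+2)) / (8 * (4*real m+5))))"

lemma solve_lin: fixes y0 y1 P0 P1 S :: real
  assumes "y0 * P0 + y1 * P1 = 0" "P1 \<noteq> 0" "S * P1 = - P0"
  shows "y1 = y0 * S"
proof -
  have "y1 * P1 = - (y0 * P0)" using assms(1) by linarith
  also have "\<dots> = y0 * (S * P1)" using assms(3) by simp
  finally have "y1 * P1 = (y0 * S) * P1" by simp
  thus ?thesis using assms(2) by simp
qed

lemma lamf_simps: "lamf m 0 = 0" "lamf m 1 = 2 * real m + 1" "lamf m 2 = - (2 * real m + 1)"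
  "lamf m 3 = 2 * real m + 2" "lamf m 4 = - (2 * real m + 2)" "lamf m 5 = 2 * real m + 3" "lamf m 6 = - (2 * real m + 3)"
  by (simp_all add: lamf_def)

lemma Sf_simps: "Sf m 0 = 1" "Sf m 1 = (- ((2*real m+2) * (2*real m+3)^2) / (8 * (4*real m+3)))" "Sf m 2 = (- ((2*real m+2) * (2*real m+3)^2) / (8 * (4*real m+3)))" "Sf m 3 = ((2*real m+1)^2 * (2*real m+3)^2 / (2 * (4*real m+3) * (4*real m+5)))" "Sf m 4 = ((2*real m+1)^2 * (2*real m+3)^2 / (2 * (4*real m+3) * (4*real m+5)))" "Sf m 5 = (- ((2*real m+1)^2 * (2*real m+2)) / (8 * (4*real m+5)))" "Sf m 6 = (- ((2*real m+1)^2 * (2*real m+2)) / (8 * (4*real m+5)))"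
  by (simp_all add: Sf_def)

locale spec7c = spec7 J "lamf m" v for J v m +
  assumes band6: "\<And>k. k < 6 \<Longrightarrow> (J ^\<^sub>m k) $$ (6,0) = 0"
begin

definition y :: "nat \<Rightarrow> real" where "y j = v j $ 6 * v j $ 0 / nv j"
definition w :: "nat \<Rightarrow> real" where "w j = (v j $ 0)^2 / nv j"

lemma ymom: "k < 6 \<Longrightarrow> (\<Sum>i<7. y i * lamf m i ^ k) = 0"
  using band6[of k] power[of 6 0 k] unfolding y_def by simp

lemma yS: assumes "j < 7" shows "y j = y 0 * Sf m j"
proof -
  define M where "M = real m"
  have M: "M \<ge> 0" unfolding M_def by simp
  have d: "4*M+3 \<noteq> 0" "4*M+5 \<noteq> 0" "3+4*M \<noteq> 0" "5+4*M \<noteq> 0" "3+M*4 \<noteq> 0" "5+M*4 \<noteq> 0"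
     "2 * (4*M+3) * (4*M+5) \<noteq> 0" using M by auto
  have "j = 0 \<or> j = 1 \<or> j = 2 \<or> j = 3 \<or> j = 4 \<or> j = 5 \<or> j = 6" using assms by auto
  then show ?thesis
  proof (elim disjE)
    assume "j = 0" thus ?thesis by (simp add: Sf_def)
  next
    assume j: "j = 1"
    have "(\<Sum>i<7. y i * ((lamf m i - lamf m 2) * (lamf m i - lamf m 3) * (lamf m i - lamf m 4) * (lamf m i - lamf m 5) * (lamf m i - lamf m 6))) = 0"
      by (rule van5) (rule ymom)
    hence e: "y 0 * ((lamf m 0 - lamf m 2) * (lamf m 0 - lamf m 3) * (lamf m 0 - lamf m 4) * (lamf m 0 - lamf m 5) * (lamf m 0 - lamf m 6)) + y 1 * ((lamf m 1 - lamf m 2) * (lamf m 1 - lamf m 3) * (lamf m 1 - lamf m 4) * (lamf m 1 - lamf m 5) * (lamf m 1 - lamf m 6)) = 0"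
      unfolding sum7 by simp
    have nz: "(lamf m 1 - lamf m 2) * (lamf m 1 - lamf m 3) * (lamf m 1 - lamf m 4) * (lamf m 1 - lamf m 5) * (lamf m 1 - lamf m 6) \<noteq> 0" unfolding lamf_simps using M by (simp add: M_def)
    have eq: "Sf m 1 * ((lamf m 1 - lamf m 2) * (lamf m 1 - lamf m 3) * (lamf m 1 - lamf m 4) * (lamf m 1 - lamf m 5) * (lamf m 1 - lamf m 6)) = - ((lamf m 0 - lamf m 2) * (lamf m 0 - lamf m 3) * (lamf m 0 - lamf m 4) * (lamf m 0 - lamf m 5) * (lamf m 0 - lamf m 6))" unfolding lamf_simps Sf_simps M_def[symmetric]
      using M d by (simp add: field_simps power2_eq_square)
    show ?thesis unfolding j by (rule solve_lin[OF e nz eq])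
  next
    assume j: "j = 2"
    have "(\<Sum>i<7. y i * ((lamf m i - lamf m 1) * (lamf m i - lamf m 3) * (lamf m i - lamf m 4) * (lamf m i - lamf m 5) * (lamf m i - lamf m 6))) = 0"
      by (rule van5) (rule ymom)
    hence e: "y 0 * ((lamf m 0 - lamf m 1) * (lamf m 0 - lamf m 3) * (lamf m 0 - lamf m 4) * (lamf m 0 - lamf m 5) * (lamf m 0 - lamf m 6)) + y 2 * ((lamf m 2 - lamf m 1) * (lamf m 2 - lamf m 3) * (lamf m 2 - lamf m 4) * (lamf m 2 - lamf m 5) * (lamf m 2 - lamf m 6)) = 0"
      unfolding sum7 by simp
    have nz: "(lamf m 2 - lamf m 1) * (lamf m 2 - lamf m 3) * (lamf m 2 - lamf m 4) * (lamf m 2 - lamf m 5) * (lamf m 2 - lamf m 6) \<noteq> 0" unfolding lamf_simps using M by (simp add: M_def)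
    have eq: "Sf m 2 * ((lamf m 2 - lamf m 1) * (lamf m 2 - lamf m 3) * (lamf m 2 - lamf m 4) * (lamf m 2 - lamf m 5) * (lamf m 2 - lamf m 6)) = - ((lamf m 0 - lamf m 1) * (lamf m 0 - lamf m 3) * (lamf m 0 - lamf m 4) * (lamf m 0 - lamf m 5) * (lamf m 0 - lamf m 6))" unfolding lamf_simps Sf_simps M_def[symmetric]
      using M d by (simp add: field_simps power2_eq_square)
    show ?thesis unfolding j by (rule solve_lin[OF e nz eq])
  next
    assume j: "j = 3"
    have "(\<Sum>i<7. y i * ((lamf m i - lamf m 1) * (lamf m i - lamf m 2) * (lamf m i - lamf m 4) * (lamf m i - lamf m 5) * (lamf m i - lamf m 6))) = 0"
      by (rule van5) (rule ymom)
    hence e: "y 0 * ((lamf m 0 - lamf m 1) * (lamf m 0 - lamf m 2) * (lamf m 0 - lamf m 4) * (lamf m 0 - lamf m 5) * (lamf m 0 - lamf m 6)) + y 3 * ((lamf m 3 - lamf m 1) * (lamf m 3 - lamf m 2) * (lamf m 3 - lamf m 4) * (lamf m 3 - lamf m 5) * (lamf m 3 - lamf m 6)) = 0"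
      unfolding sum7 by simp
    have nz: "(lamf m 3 - lamf m 1) * (lamf m 3 - lamf m 2) * (lamf m 3 - lamf m 4) * (lamf m 3 - lamf m 5) * (lamf m 3 - lamf m 6) \<noteq> 0" unfolding lamf_simps using M by (simp add: M_def)
    have eq: "Sf m 3 * ((lamf m 3 - lamf m 1) * (lamf m 3 - lamf m 2) * (lamf m 3 - lamf m 4) * (lamf m 3 - lamf m 5) * (lamf m 3 - lamf m 6)) = - ((lamf m 0 - lamf m 1) * (lamf m 0 - lamf m 2) * (lamf m 0 - lamf m 4) * (lamf m 0 - lamf m 5) * (lamf m 0 - lamf m 6))" unfolding lamf_simps Sf_simps M_def[symmetric]
      using M d by (simp add: field_simps power2_eq_square)
    show ?thesis unfolding j by (rule solve_lin[OF e nz eq])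
  next
    assume j: "j = 4"
    have "(\<Sum>i<7. y i * ((lamf m i - lamf m 1) * (lamf m i - lamf m 2) * (lamf m i - lamf m 3) * (lamf m i - lamf m 5) * (lamf m i - lamf m 6))) = 0"
      by (rule van5) (rule ymom)
    hence e: "y 0 * ((lamf m 0 - lamf m 1) * (lamf m 0 - lamf m 2) * (lamf m 0 - lamf m 3) * (lamf m 0 - lamf m 5) * (lamf m 0 - lamf m 6)) + y 4 * ((lamf m 4 - lamf m 1) * (lamf m 4 - lamf m 2) * (lamf m 4 - lamf m 3) * (lamf m 4 - lamf m 5) * (lamf m 4 - lamf m 6)) = 0"
      unfolding sum7 by simp
    have nz: "(lamf m 4 - lamf m 1) * (lamf m 4 - lamf m 2) * (lamf m 4 - lamf m 3) * (lamf m 4 - lamf m 5) * (lamf m 4 - lamf m 6) \<noteq> 0" unfolding lamf_simps using M by (simp add: M_def)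
    have eq: "Sf m 4 * ((lamf m 4 - lamf m 1) * (lamf m 4 - lamf m 2) * (lamf m 4 - lamf m 3) * (lamf m 4 - lamf m 5) * (lamf m 4 - lamf m 6)) = - ((lamf m 0 - lamf m 1) * (lamf m 0 - lamf m 2) * (lamf m 0 - lamf m 3) * (lamf m 0 - lamf m 5) * (lamf m 0 - lamf m 6))" unfolding lamf_simps Sf_simps M_def[symmetric]
      using M d by (simp add: field_simps power2_eq_square)
    show ?thesis unfolding j by (rule solve_lin[OF e nz eq])
  next
    assume j: "j = 5"
    have "(\<Sum>i<7. y i * ((lamf m i - lamf m 1) * (lamf m i - lamf m 2) * (lamf m i - lamf m 3) * (lamf m i - lamf m 4) * (lamf m i - lamf m 6))) = 0"
      by (rule van5) (rule ymom)
    hence e: "y 0 * ((lamf m 0 - lamf m 1) * (lamf m 0 - lamf m 2) * (lamf m 0 - lamf m 3) * (lamf m 0 - lamf m 4) * (lamf m 0 - lamf m 6)) + y 5 * ((lamf m 5 - lamf m 1) * (lamf m 5 - lamf m 2) * (lamf m 5 - lamf m 3) * (lamf m 5 - lamf m 4) * (lamf m 5 - lamf m 6)) = 0"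
      unfolding sum7 by simp
    have nz: "(lamf m 5 - lamf m 1) * (lamf m 5 - lamf m 2) * (lamf m 5 - lamf m 3) * (lamf m 5 - lamf m 4) * (lamf m 5 - lamf m 6) \<noteq> 0" unfolding lamf_simps using M by (simp add: M_def)
    have eq: "Sf m 5 * ((lamf m 5 - lamf m 1) * (lamf m 5 - lamf m 2) * (lamf m 5 - lamf m 3) * (lamf m 5 - lamf m 4) * (lamf m 5 - lamf m 6)) = - ((lamf m 0 - lamf m 1) * (lamf m 0 - lamf m 2) * (lamf m 0 - lamf m 3) * (lamf m 0 - lamf m 4) * (lamf m 0 - lamf m 6))" unfolding lamf_simps Sf_simps M_def[symmetric]
      using M d by (simp add: field_simps power2_eq_square)
    show ?thesis unfolding j by (rule solve_lin[OF e nz eq])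
  next
    assume j: "j = 6"
    have "(\<Sum>i<7. y i * ((lamf m i - lamf m 1) * (lamf m i - lamf m 2) * (lamf m i - lamf m 3) * (lamf m i - lamf m 4) * (lamf m i - lamf m 5))) = 0"
      by (rule van5) (rule ymom)
    hence e: "y 0 * ((lamf m 0 - lamf m 1) * (lamf m 0 - lamf m 2) * (lamf m 0 - lamf m 3) * (lamf m 0 - lamf m 4) * (lamf m 0 - lamf m 5)) + y 6 * ((lamf m 6 - lamf m 1) * (lamf m 6 - lamf m 2) * (lamf m 6 - lamf m 3) * (lamf m 6 - lamf m 4) * (lamf m 6 - lamf m 5)) = 0"
      unfolding sum7 by simp
    have nz: "(lamf m 6 - lamf m 1) * (lamf m 6 - lamf m 2) * (lamf m 6 - lamf m 3) * (lamf m 6 - lamf m 4) * (lamf m 6 - lamf m 5) \<noteq> 0" unfolding lamf_simps using M by (simp add: M_def)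
    have eq: "Sf m 6 * ((lamf m 6 - lamf m 1) * (lamf m 6 - lamf m 2) * (lamf m 6 - lamf m 3) * (lamf m 6 - lamf m 4) * (lamf m 6 - lamf m 5)) = - ((lamf m 0 - lamf m 1) * (lamf m 0 - lamf m 2) * (lamf m 0 - lamf m 3) * (lamf m 0 - lamf m 4) * (lamf m 0 - lamf m 5))" unfolding lamf_simps Sf_simps M_def[symmetric]
      using M d by (simp add: field_simps power2_eq_square)
    show ?thesis unfolding j by (rule solve_lin[OF e nz eq])
  qed
qed

end

fun cheb :: "nat \<Rightarrow> real poly" where
  "cheb 0 = 1"
| "cheb (Suc 0) = [:0,1:]"
| "cheb (Suc (Suc n)) = [:0,2:] * cheb (Suc n) - cheb n"

lemma cos_rec: "cos ((real n + 2) * x) = 2 * cos x * cos ((real n + 1) * x) - cos (real n * x)"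
proof -
  have "cos ((real n + 2) * x) = cos ((real n + 1) * x + x)" by (simp add: algebra_simps)
  moreover have "cos (real n * x) = cos ((real n + 1) * x - x)" by (simp add: algebra_simps)
  ultimately show ?thesis by (simp add: cos_add cos_diff)
qed

lemma cheb_cos: "poly (cheb n) (cos x) = cos (real n * x)"
proof (induction n rule: cheb.induct)
  case (3 n)
  have "poly (cheb (Suc (Suc n))) (cos x) = 2 * cos x * cos ((real n + 1) * x) - cos (real n * x)"
    using 3 by (simp add: algebra_simps)
  also have "\<dots> = cos ((real n + 2) * x)" by (rule cos_rec[symmetric])
  finally show ?case by (simp add: add.commute)
qed auto

lemma cheb_deg: "degree (cheb n) \<le> n"
proof (induction n rule: cheb.induct)
  case (3 n)
  have "degree ([:0,2:] * cheb (Suc n)) \<le> Suc (Suc n)"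
    using degree_mult_le[of "[:0,2:]" "cheb (Suc n)"] 3 by simp
  moreover have "degree (cheb n) \<le> Suc (Suc n)" using 3 by simp
  ultimately show ?case by (simp add: degree_diff_le)
qed auto

lemma cheb_m1: "poly (cheb n) (-1) = (-1)^n"
  using cheb_cos[of n pi] by simp

lemma cheb_d1: "poly (pderiv (cheb n)) (-1) = (-1)^(n+1) * (real n)^2"
proof (induction n rule: cheb.induct)
  case (3 n)
  have "pderiv (cheb (Suc (Suc n))) = [:2:] * cheb (Suc n) + [:0,2:] * pderiv (cheb (Suc n)) - pderiv (cheb n)"
    by (simp add: pderiv_mult pderiv_diff pderiv_pCons pderiv_smult algebra_simps)
  note d = this
  have "poly (pderiv (cheb (Suc (Suc n)))) (-1) = 2 * (-1)^(n+1) - 2 * ((-1)^(n+2) * (real n + 1)^2) - (-1)^(n+1) * (real n)^2"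
    unfolding d using 3 cheb_m1[of "Suc n"] by (simp add: algebra_simps)
  also have "\<dots> = (-1)^(n+3) * (real n + 2)^2" by (simp add: power_add algebra_simps power2_eq_square)
  finally show ?case by (simp add: power_add algebra_simps)
qed (auto simp: pderiv_pCons)

lemma cheb_d2: "poly (pderiv (pderiv (cheb n))) (-1) = (-1)^n * (real n)^2 * ((real n)^2 - 1) / 3"
proof (induction n rule: cheb.induct)
  case (3 n)
  have "pderiv (pderiv (cheb (Suc (Suc n)))) = [:4:] * pderiv (cheb (Suc n)) + [:0,2:] * pderiv (pderiv (cheb (Suc n))) - pderiv (pderiv (cheb n))"
    by (simp add: pderiv_mult pderiv_diff pderiv_add pderiv_pCons pderiv_smult algebra_simps numeral_poly)
  note d = this
  have "poly (pderiv (pderiv (cheb (Suc (Suc n))))) (-1) = 4 * ((-1)^(n+2) * (real n + 1)^2) - 2 * ((-1)^(n+1) * (real n + 1)^2 * ((real n + 1)^2 - 1) / 3) - (-1)^n * (real n)^2 * ((real n)^2 - 1) / 3"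
    unfolding d using 3 cheb_d1[of "Suc n"] by (simp only: poly_add poly_diff poly_mult) (simp add: power_add field_simps power2_eq_square del: cheb.simps)
  also have "\<dots> = (-1)^(n+2) * (real n + 2)^2 * ((real n + 2)^2 - 1) / 3" by (simp add: power_add field_simps power2_eq_square)
  finally show ?case by (simp add: add.commute)
qed (auto simp: pderiv_pCons)


declare cheb.simps(3)[simp del]

definition bb :: "nat \<Rightarrow> real" where "bb m = 2 * real m + 2"
definition cA :: "real \<Rightarrow> real" where "cA b = 2 * (4 * b^2 - 1)"
definition cal :: "real \<Rightarrow> real" where "cal b = 2 * (b^2 - 1)^2"
definition cE :: "real \<Rightarrow> real" where "cE b = b * (b+1)^2 * (2*b+1) / 2"
definition cD :: "real \<Rightarrow> real" where "cD b = b * (b-1)^2 * (2*b-1) / 2"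

definition Fz :: "nat \<Rightarrow> real \<Rightarrow> real" where
  "Fz m t = cA (bb m) + cal (bb m) * cos (bb m * t) + cE (bb m) * cos ((bb m - 1) * t) + cD (bb m) * cos ((bb m + 1) * t)"

definition Pm :: "nat \<Rightarrow> real poly" where
  "Pm m = [:cA (bb m):] + Polynomial.smult (cal (bb m)) (cheb (2*m+2)) + Polynomial.smult (cE (bb m)) (cheb (2*m+1)) + Polynomial.smult (cD (bb m)) (cheb (2*m+3))"

lemma Pm_cos: "poly (Pm m) (cos t) = Fz m t"
  unfolding Pm_def Fz_def by (simp add: cheb_cos bb_def algebra_simps)

lemma Pm_deg: "degree (Pm m) \<le> 2*m+3"
proof -
  have "degree (Polynomial.smult (cal (bb m)) (cheb (2*m+2))) \<le> 2*m+3"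
    using cheb_deg[of "2*m+2"] degree_smult_le[of "cal (bb m)" "cheb (2*m+2)"] by linarith
  moreover have "degree (Polynomial.smult (cE (bb m)) (cheb (2*m+1))) \<le> 2*m+3"
    using cheb_deg[of "2*m+1"] degree_smult_le[of "cE (bb m)" "cheb (2*m+1)"] by linarith
  moreover have "degree (Polynomial.smult (cD (bb m)) (cheb (2*m+3))) \<le> 2*m+3"
    using cheb_deg[of "2*m+3"] degree_smult_le[of "cD (bb m)" "cheb (2*m+3)"] by linarith
  moreover have "degree [:cA (bb m):] \<le> 2*m+3" by simp
  ultimately show ?thesis unfolding Pm_def
    by (intro degree_add_le) auto
qed

lemma negpow: "(-1::real)^(2*m+2) = 1" "(-1::real)^(2*m+1) = -1" "(-1::real)^(2*m+3) = -1"
  "(-1::real)^(2*m+2+1) = -1" "(-1::real)^(2*m+1+1) = 1" "(-1::real)^(2*m+3+1) = 1"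
  by (simp_all add: power_add power_mult)

lemma Pm_m1: "poly (Pm m) (-1) = 0"
proof -
  have h: "poly (cheb (2*m+2)) (-1) = 1" "poly (cheb (2*m+1)) (-1) = -1" "poly (cheb (2*m+3)) (-1) = -1"
    by (simp_all only: cheb_m1 negpow)
  show ?thesis unfolding Pm_def
    by (simp only: poly_add poly_smult poly_pCons h) (simp add: cA_def cal_def cE_def cD_def bb_def field_simps power2_eq_square)
qed

lemma Pm_d1: "poly (pderiv (Pm m)) (-1) = 0"
proof -
  have h: "poly (pderiv (cheb (2*m+2))) (-1) = - ((2*real m+2)^2)" "poly (pderiv (cheb (2*m+1))) (-1) = (2*real m+1)^2"
     "poly (pderiv (cheb (2*m+3))) (-1) = (2*real m+3)^2"
    by (simp_all only: cheb_d1 negpow) (simp_all add: algebra_simps)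
  show ?thesis unfolding Pm_def
    by (simp only: pderiv_add pderiv_smult pderiv_pCons poly_add poly_smult poly_pCons h pderiv_0 poly_0)
      (simp add: cA_def cal_def cE_def cD_def bb_def field_simps power2_eq_square)
qed

lemma Pm_d2: "poly (pderiv (pderiv (Pm m))) (-1) = 0"
proof -
  have h: "poly (pderiv (pderiv (cheb (2*m+2)))) (-1) = (2*real m+2)^2 * ((2*real m+2)^2 - 1) / 3"
     "poly (pderiv (pderiv (cheb (2*m+1)))) (-1) = - ((2*real m+1)^2 * ((2*real m+1)^2 - 1) / 3)"
     "poly (pderiv (pderiv (cheb (2*m+3)))) (-1) = - ((2*real m+3)^2 * ((2*real m+3)^2 - 1) / 3)"
    by (simp_all only: cheb_d2 negpow) (simp_all add: field_simps)
  show ?thesis unfolding Pm_def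
    by (simp only: pderiv_add pderiv_smult pderiv_pCons poly_add poly_smult poly_pCons h pderiv_0 poly_0)
      (simp add: cA_def cal_def cE_def cD_def bb_def field_simps power2_eq_square)
qed


lemma Fz0: "Fz m 0 = 4 * bb m ^ 4 + 8 * bb m ^ 2"
  unfolding Fz_def cA_def cal_def cE_def cD_def by (simp add: field_simps power2_eq_square power4_eq_xxxx)

lemma bb_ge: "bb m \<ge> 2" unfolding bb_def by simp

lemma Pm_nz: "Pm m \<noteq> 0"
proof
  assume "Pm m = 0"
  hence "poly (Pm m) (cos 0) = 0" by simp
  hence "Fz m 0 = 0" by (simp only: Pm_cos)
  moreover have "Fz m 0 > 0" unfolding Fz0 using bb_ge[of m] by (simp add: add_pos_pos)
  ultimately show False by simp
qed

lemma upper: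
  fixes m :: nat
  defines "Zs \<equiv> {t. 0 < t \<and> t < pi \<and> Fz m t = 0}"
  shows "finite Zs \<and> card Zs \<le> 2 * m"
proof -
  define P where "P = Pm m"
  have P0: "P \<noteq> 0" unfolding P_def by (rule Pm_nz)
  have r0: "poly P (-1) = 0" and r1: "poly (pderiv P) (-1) = 0" and r2: "poly (pderiv (pderiv P)) (-1) = 0"
    unfolding P_def by (rule Pm_m1, rule Pm_d1, rule Pm_d2)
  have P1: "pderiv P \<noteq> 0"
  proof
    assume "pderiv P = 0"
    then obtain h where "P = [:h:]" using pderiv_iszero by blast
    with r0 P0 show False by simp
  qed
  have P2: "pderiv (pderiv P) \<noteq> 0"
  proof
    assume "pderiv (pderiv P) = 0"
    then obtain h where "pderiv P = [:h:]" using pderiv_iszero by blast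
    with r1 P1 show False by simp
  qed
  have o1: "order (-1) P = Suc (order (-1) (pderiv P))" by (rule order_pderiv[OF P0 r0])
  have o2: "order (-1) (pderiv P) = Suc (order (-1) (pderiv (pderiv P)))" by (rule order_pderiv[OF P1 r1])
  have o3: "order (-1) (pderiv (pderiv P)) \<noteq> 0" using r2 P2 order_root by blast
  have "3 \<le> order (-1) P" using o1 o2 o3 by linarith
  hence "[:- (-1), 1:] ^ 3 dvd P" using order_divides[of "-1" 3 P] by blast
  then obtain R where PR0: "P = [:- (-1), 1:] ^ 3 * R" by (rule dvdE)
  have PR: "P = [:1, 1:] ^ 3 * R" using PR0 by simp
  have R0: "R \<noteq> 0" using P0 PR by auto
  have "degree P = 3 + degree R" unfolding PR
    by (subst degree_mult_eq) (use R0 in \<open>auto simp: degree_linear_power\<close>)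
  moreover have "degree P \<le> 2*m+3" unfolding P_def by (rule Pm_deg)
  ultimately have dR: "degree R \<le> 2*m" by linarith
  have sub: "cos ` Zs \<subseteq> {x. poly R x = 0}"
  proof
    fix x assume "x \<in> cos ` Zs"
    then obtain t where t: "0 < t" "t < pi" "Fz m t = 0" "x = cos t" unfolding Zs_def by auto
    have "poly P x = 0" using t Pm_cos[of m t] unfolding P_def by simp
    moreover have "poly P x = (1 + x)^3 * poly R x" unfolding PR by (simp add: poly_power)
    moreover have "cos pi < cos t" by (rule cos_monotone_0_pi) (use t in auto)
    hence "1 + x > 0" using t by simp
    hence "(1 + x)^3 \<noteq> 0" by simp
    ultimately show "x \<in> {x. poly R x = 0}" by simp
  qed
  have fR: "finite {x. poly R x = 0}" using poly_roots_finite[OF R0] .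
  have inj: "inj_on cos Zs"
  proof (rule inj_onI)
    fix s t assume "s \<in> Zs" "t \<in> Zs" "cos s = cos t"
    thus "s = t" unfolding Zs_def using cos_inj_pi[of s t] by auto
  qed
  have fin: "finite Zs" using finite_imageD[OF finite_subset[OF sub fR] inj] .
  have "card Zs = card (cos ` Zs)" using card_image[OF inj] by simp
  also have "\<dots> \<le> card {x. poly R x = 0}" by (rule card_mono[OF fR sub])
  also have "\<dots> \<le> degree R" by (rule card_poly_roots_bound[OF R0])
  finally show ?thesis using fin dR by simp
qed


lemma cos_taylor4: fixes x :: real assumes "x > 0" shows "cos x \<le> 1 - x^2/2 + x^4/24"
proof -
  obtain t where t: "cos x = (\<Sum>m<4. cos_coeff m * x ^ m) + (cos (t + 1/2 * real 4 * pi) / fact 4) * x ^ 4"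
    using Maclaurin_cos_expansion2[OF assms, of 4] by auto
  have c4: "cos_coeff 0 = 1" "cos_coeff 1 = 0" "cos_coeff 2 = -1/2" "cos_coeff 3 = 0"
    by (simp_all add: cos_coeff_def)
  have "(\<Sum>m<4. cos_coeff m * x ^ m) = cos_coeff 0 * x^0 + cos_coeff 1 * x^1 + cos_coeff 2 * x^2 + cos_coeff 3 * x^3"
    by (simp add: eval_nat_numeral)
  hence s: "(\<Sum>m<4. cos_coeff m * x ^ m) = 1 - x^2/2" unfolding c4 by simp
  have "cos (t + 1/2 * real 4 * pi) \<le> 1" by simp
  hence "(cos (t + 1/2 * real 4 * pi) / fact 4) * x ^ 4 \<le> (1 / fact 4) * x^4"
    by (intro mult_right_mono divide_right_mono) auto
  thus ?thesis using t s by (simp add: eval_nat_numeral)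
qed

lemma pi_ge3: "pi \<ge> 3"
  using sin_x_le_x[of "pi/6"] sin_30 by simp

lemma key_ineq: assumes "b \<ge> 4" shows "(2*b^4 + 4*b^2) * (1 - cos (3*pi/b)) > 16*b^2 - 4"
proof -
  define x where "x = 3*pi/b"
  have b0: "b > 0" using assms by simp
  have x0: "x > 0" unfolding x_def using b0 by simp
  have x3: "x < 3" unfolding x_def using pi_less_4 assms b0 by (simp add: field_simps)
  have x9: "x * b \<ge> 9" unfolding x_def using pi_ge3 b0 by (simp add: field_simps)
  have "cos x \<le> 1 - x^2/2 + x^4/24" by (rule cos_taylor4[OF x0])
  moreover have "x * x < 3 * 3" using mult_strict_mono[of x 3 x 3] x3 x0 by simp
  hence "x^4 < 9 * x^2" using x0 by (simp add: power4_eq_xxxx power2_eq_square)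
  ultimately have c: "1 - cos x > x^2/8" by (simp add: field_simps)
  have "(x * b)^2 \<ge> 9^2" using x9 by (intro power_mono) auto
  hence xb: "x^2 * b^2 \<ge> 81" by (simp add: power_mult_distrib)
  have "(2*b^4 + 4*b^2) * (1 - cos x) \<ge> (2*b^4 + 4*b^2) * (x^2/8)"
    using c b0 by (intro mult_left_mono) (auto intro: add_nonneg_nonneg)
  moreover have "(2*b^4 + 4*b^2) * (x^2/8) = (b^2 + 2) * (x^2 * b^2) / 4"
    by (simp add: field_simps power4_eq_xxxx power2_eq_square)
  moreover have "(b^2 + 2) * (x^2 * b^2) / 4 \<ge> (b^2 + 2) * 81 / 4"
    using xb by (intro divide_right_mono mult_left_mono) auto
  moreover have "(b^2 + 2) * 81 / 4 > 16*b^2 - 4" using zero_le_power2[of b] by (simp add: field_simps; linarith)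
  ultimately show ?thesis unfolding x_def by linarith
qed


lemma Fz_grid: "Fz m (real j * pi / bb m) = cA (bb m) + (-1)^j * (cal (bb m) + (cE (bb m) + cD (bb m)) * cos (real j * pi / bb m))"
proof -
  define b where "b = bb m"
  define th where "th = real j * pi / b"
  have b0: "b \<noteq> 0" using bb_ge[of m] unfolding b_def by simp
  have e1: "b * th = real j * pi" unfolding th_def using b0 by simp
  have e2: "(b - 1) * th = real j * pi - th" unfolding th_def using b0 by (simp add: field_simps)
  have e3: "(b + 1) * th = real j * pi + th" unfolding th_def using b0 by (simp add: field_simps)
  show ?thesis unfolding Fz_def b_def[symmetric] th_def[symmetric] e1 e2 e3
    by (simp add: cos_diff cos_add algebra_simps)
qed

lemma sumA: "cA b + cal b = 2*b^4 + 4*b^2" unfolding cA_def cal_def by (simp add: field_simps power2_eq_square power4_eq_xxxx)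
lemma sumE: "cE b + cD b = 2*b^4 + 4*b^2" unfolding cE_def cD_def by (simp add: field_simps power2_eq_square power4_eq_xxxx)
lemma difA: "2*b^4 + 4*b^2 + cA b - cal b = 16*b^2 - 4" unfolding cA_def cal_def by (simp add: field_simps power2_eq_square power4_eq_xxxx)

lemma grid_even: assumes "even j" "j < 2*m+2" shows "Fz m (real j * pi / bb m) > 0"
proof -
  define b where "b = bb m"
  have b2: "b \<ge> 2" using bb_ge[of m] unfolding b_def .
  have jb: "real j < b" using assms(2) unfolding b_def bb_def by linarith
  have "real j * pi / b < pi" using jb b2 by (simp add: field_simps)
  moreover have "0 \<le> real j * pi / b" using b2 by simp
  ultimately have "cos pi < cos (real j * pi / b)" by (intro cos_monotone_0_pi) auto
  hence c: "1 + cos (real j * pi / b) > 0" by simp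
  have "Fz m (real j * pi / bb m) = (2*b^4 + 4*b^2) * (1 + cos (real j * pi / b))"
    unfolding Fz_grid unfolding b_def[symmetric] using assms(1) sumA[of b] sumE[of b] by (simp add: algebra_simps)
  also have "\<dots> > 0" using c b2 by (intro mult_pos_pos) (auto intro: add_pos_pos)
  finally show ?thesis .
qed

lemma grid_odd: assumes "odd j" "j < 2*m" shows "Fz m (real j * pi / bb m) < 0"
proof -
  define b where "b = bb m"
  have b2: "b \<ge> 2" using bb_ge[of m] unfolding b_def .
  have m1: "m \<ge> 1" using assms by (cases m) auto
  have b4: "b \<ge> 4" using m1 unfolding b_def bb_def by simp
  have jb: "real j \<le> b - 3" using assms(2) unfolding b_def bb_def by linarith
  define x where "x = 3 * pi / b"
  have "real j * pi \<le> (b - 3) * pi" using jb by (intro mult_right_mono) auto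
  hence "real j * pi / b \<le> (b - 3) * pi / b" using b2 by (intro divide_right_mono) auto
  moreover have "(b - 3) * pi / b = pi - x" unfolding x_def using b2 by (simp add: field_simps)
  ultimately have thle: "real j * pi / b \<le> pi - x" by simp
  have x0: "x \<le> pi" unfolding x_def using b4 by (simp add: field_simps)
  have x00: "0 \<le> x" unfolding x_def using b4 by simp
  have "cos (pi - x) \<le> cos (real j * pi / b)"
    using thle x0 x00 b2 by (intro cos_monotone_0_pi_le) auto
  hence c: "cos (real j * pi / b) \<ge> - cos x" by simp
  have "Fz m (real j * pi / bb m) = cA b - cal b - (2*b^4 + 4*b^2) * cos (real j * pi / b)"
    unfolding Fz_grid unfolding b_def[symmetric] using assms(1) sumE[of b] by (simp add: algebra_simps)
  also have "\<dots> \<le> cA b - cal b + (2*b^4 + 4*b^2) * cos x"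
    using c b2 mult_left_mono[OF c, of "2*b^4 + 4*b^2"] by (simp add: algebra_simps)
  also have "\<dots> < 0" using key_ineq[OF b4] difA[of b] unfolding x_def by (simp add: algebra_simps)
  finally show ?thesis .
qed


lemma Fz_cont: "continuous_on S (Fz m)"
  unfolding Fz_def by (intro continuous_intros)

lemma root_in: assumes "j < 2*m"
  shows "\<exists>t. real j * pi / bb m < t \<and> t < real (Suc j) * pi / bb m \<and> Fz m t = 0"
proof -
  define a where "a = real j * pi / bb m"
  define c where "c = real (Suc j) * pi / bb m"
  have ac: "a \<le> c" unfolding a_def c_def using bb_ge[of m] by (intro divide_right_mono mult_right_mono) auto
  have "(Fz m a > 0 \<and> Fz m c < 0) \<or> (Fz m a < 0 \<and> Fz m c > 0)"
  proof (cases "even j")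
    case True
    hence "odd (Suc j)" by simp
    moreover have "Suc j < 2*m" using True assms by presburger
    ultimately show ?thesis unfolding a_def c_def using grid_even[OF True, of m] grid_odd[of "Suc j" m] assms by auto
  next
    case False
    hence "even (Suc j)" by simp
    thus ?thesis unfolding a_def c_def using grid_even[of "Suc j" m] grid_odd[OF False, of m] assms by auto
  qed
  then obtain t where t: "a \<le> t" "t \<le> c" "Fz m t = 0"
  proof (elim disjE conjE)
    assume "Fz m a > 0" "Fz m c < 0"
    thus ?thesis using IVT2'[of "Fz m" c 0 a, OF _ _ ac Fz_cont] that by auto
  next
    assume "Fz m a < 0" "Fz m c > 0"
    thus ?thesis using IVT'[of "Fz m" a 0 c, OF _ _ ac Fz_cont] that by auto
  qed
  have "t \<noteq> a" "t \<noteq> c" using t \<open>(Fz m a > 0 \<and> Fz m c < 0) \<or> (Fz m a < 0 \<and> Fz m c > 0)\<close> by auto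
  thus ?thesis using t unfolding a_def c_def by (intro exI[of _ t]) auto
qed

theorem zero_count: assumes "m \<ge> 1"
  shows "card {t. 0 < t \<and> t < pi \<and> Fz m t = 0} = 2 * m"
proof -
  define Zs where "Zs = {t. 0 < t \<and> t < pi \<and> Fz m t = 0}"
  have up: "finite Zs" "card Zs \<le> 2*m" using upper[of m] unfolding Zs_def by auto
  obtain r where r: "\<And>j. j < 2*m \<Longrightarrow> real j * pi / bb m < r j \<and> r j < real (Suc j) * pi / bb m \<and> Fz m (r j) = 0"
    using root_in[of _ m] by metis
  have b: "bb m = real (2*m+2)" unfolding bb_def by simp
  have sub: "r ` {..<2*m} \<subseteq> Zs"
  proof
    fix x assume "x \<in> r ` {..<2*m}"
    then obtain j where j: "j < 2*m" "x = r j" by auto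
    have "0 \<le> real j * pi / bb m" using bb_ge[of m] by simp
    moreover have "real (Suc j) * pi / bb m \<le> pi"
    proof -
      have "real (Suc j) \<le> bb m" using j unfolding b by simp
      hence "real (Suc j) * pi \<le> bb m * pi" by (intro mult_right_mono) auto
      thus ?thesis using bb_ge[of m] by (simp add: field_simps)
    qed
    ultimately show "x \<in> Zs" unfolding Zs_def using r[OF j(1)] j(2) by auto
  qed
  have inj: "inj_on r {..<2*m}"
  proof (rule inj_onI)
    fix i j assume ij: "i \<in> {..<2*m}" "j \<in> {..<2*m}" "r i = r j"
    show "i = j"
    proof (rule ccontr)
      assume "i \<noteq> j"
      hence "i < j \<or> j < i" by auto
      thus False
      proof
        assume "i < j"
        hence "real (Suc i) * pi / bb m \<le> real j * pi / bb m" using bb_ge[of m]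
          by (intro divide_right_mono mult_right_mono) auto
        thus False using r[of i] r[of j] ij by auto
      next
        assume "j < i"
        hence "real (Suc j) * pi / bb m \<le> real i * pi / bb m" using bb_ge[of m]
          by (intro divide_right_mono mult_right_mono) auto
        thus False using r[of i] r[of j] ij by auto
      qed
    qed
  qed
  have "2*m = card (r ` {..<2*m})" using card_image[OF inj] by simp
  also have "\<dots> \<le> card Zs" by (rule card_mono[OF up(1) sub])
  finally show ?thesis using up(2) unfolding Zs_def by simp
qed

lemma exp_pair: "complex_of_real c * exp (- \<i> * complex_of_real (x * t)) + complex_of_real c * exp (- \<i> * complex_of_real ((- x) * t))
   = complex_of_real (2 * c * cos (x * t))"
proof -
  have "exp (- \<i> * complex_of_real (x * t)) = cis (- (x * t))" by (simp add: cis_conv_exp)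
  moreover have "exp (- \<i> * complex_of_real ((- x) * t)) = cis (x * t)" by (simp add: cis_conv_exp)
  ultimately show ?thesis by (simp add: complex_eq_iff)
qed

lemma lamf_Suc0: "lamf m (Suc 0) = 2 * real m + 1" by (simp add: lamf_def)

context spec7c
begin

lemma sumw: "(\<Sum>j<7. w j) = 1"
  using complete[of 0 0] unfolding w_def by (simp add: power2_eq_square)

lemma y_eq: "y 2 = y 1" "y 4 = y 3" "y 6 = y 5"
  using yS[of 1] yS[of 2] yS[of 3] yS[of 4] yS[of 5] yS[of 6] by (simp_all add: Sf_def)

lemma evol_gen: assumes "i < 7"
  shows "evol J t i = (\<Sum>j<7. complex_of_real (v j $ i * v j $ 0 / nv j) * exp (- \<i> * complex_of_real (lamf m j * t)))"
  by (rule evol_formula[OF assms])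

lemma evol6: "evol J t 6 = complex_of_real (y 0 + 2 * y 1 * cos ((2 * real m + 1) * t) + 2 * y 3 * cos ((2 * real m + 2) * t) + 2 * y 5 * cos ((2 * real m + 3) * t))"
proof -
  have "evol J t 6 = (\<Sum>j<7. complex_of_real (y j) * exp (- \<i> * complex_of_real (lamf m j * t)))"
    using evol_gen[of 6 t] unfolding y_def by simp
  also have "\<dots> = complex_of_real (y 0) + (complex_of_real (y 1) * exp (- \<i> * complex_of_real (lamf m 1 * t)) + complex_of_real (y 1) * exp (- \<i> * complex_of_real ((- lamf m 1) * t)))
     + (complex_of_real (y 3) * exp (- \<i> * complex_of_real (lamf m 3 * t)) + complex_of_real (y 3) * exp (- \<i> * complex_of_real ((- lamf m 3) * t)))
     + (complex_of_real (y 5) * exp (- \<i> * complex_of_real (lamf m 5 * t)) + complex_of_real (y 5) * exp (- \<i> * complex_of_real ((- lamf m 5) * t)))"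
    unfolding sum7 y_eq by (simp add: lamf_simps lamf_Suc0 add_ac)
  also have "\<dots> = complex_of_real (y 0 + 2 * y 1 * cos (lamf m 1 * t) + 2 * y 3 * cos (lamf m 3 * t) + 2 * y 5 * cos (lamf m 5 * t))"
    unfolding exp_pair by simp
  finally show ?thesis by (simp add: lamf_simps lamf_Suc0)
qed

end

lemma exp_mi: "exp (- \<i> * complex_of_real x) = cis (- x)"
  by (simp add: cis_conv_exp)

locale spec7p = spec7c J v m for J v m +
  fixes T0 :: real
  assumes pstT: "pst_at 7 J T0"
begin

lemma csum_orth: assumes "l < 7" "j < 7"
  shows "(\<Sum>i<7. complex_of_real (v l $ i) * complex_of_real (v j $ i)) = complex_of_real (if l = j then nv l else 0)"
proof -
  have "(\<Sum>i<7. complex_of_real (v l $ i) * complex_of_real (v j $ i)) = complex_of_real (\<Sum>i<7. v l $ i * v j $ i)"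
    by simp
  also have "(\<Sum>i<7. v l $ i * v j $ i) = (if l = j then nv l else 0)"
    using orth[OF assms] nv_alt[OF assms(1)] by auto
  finally show ?thesis .
qed

lemma pst_extract: assumes l: "l < 7" shows "\<bar>v l $ 0\<bar> = \<bar>v l $ 6\<bar>"
proof -
  obtain \<phi> where phi: "\<And>i. i < 7 \<Longrightarrow> evol J T0 i = exp (\<i> * complex_of_real \<phi>) * (if i = 6 then 1 else 0)"
    using pstT unfolding pst_at_def by auto
  define E where "E j = exp (- \<i> * complex_of_real (lamf m j * T0))" for j
  have "(\<Sum>i<7. complex_of_real (v l $ i) * evol J T0 i) = (\<Sum>i<7. complex_of_real (v l $ i) * (exp (\<i> * complex_of_real \<phi>) * (if i = 6 then 1 else 0)))"
    by (intro sum.cong refl) (simp add: phi)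
  also have "\<dots> = complex_of_real (v l $ 6) * exp (\<i> * complex_of_real \<phi>)"
    unfolding sum7 by simp
  finally have a: "(\<Sum>i<7. complex_of_real (v l $ i) * evol J T0 i) = complex_of_real (v l $ 6) * exp (\<i> * complex_of_real \<phi>)" .
  have "(\<Sum>i<7. complex_of_real (v l $ i) * evol J T0 i) =
     (\<Sum>i<7. \<Sum>j<7. complex_of_real (v l $ i) * complex_of_real (v j $ i) * (complex_of_real (v j $ 0 / nv j) * E j))"
    by (intro sum.cong refl) (simp add: evol_gen E_def sum_distrib_left mult_ac)
  also have "\<dots> = (\<Sum>j<7. \<Sum>i<7. complex_of_real (v l $ i) * complex_of_real (v j $ i) * (complex_of_real (v j $ 0 / nv j) * E j))"
    by (rule sum.swap)
  also have "\<dots> = (\<Sum>j<7. complex_of_real (if l = j then nv l else 0) * (complex_of_real (v j $ 0 / nv j) * E j))"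
  proof (intro sum.cong refl)
    fix j assume "j \<in> {..<7::nat}"
    hence j: "j < 7" by simp
    show "(\<Sum>i<7. complex_of_real (v l $ i) * complex_of_real (v j $ i) * (complex_of_real (v j $ 0 / nv j) * E j)) =
      complex_of_real (if l = j then nv l else 0) * (complex_of_real (v j $ 0 / nv j) * E j)"
      using csum_orth[OF l j] by (simp only: sum_distrib_right[symmetric])
  qed
  also have "\<dots> = (\<Sum>j<7. if j = l then complex_of_real (nv l) * (complex_of_real (v l $ 0 / nv l) * E l) else 0)"
    by (intro sum.cong refl) auto
  also have "\<dots> = complex_of_real (nv l) * (complex_of_real (v l $ 0 / nv l) * E l)"
    using l by (simp only: sum.delta finite_lessThan) simp
  also have "\<dots> = complex_of_real (v l $ 0) * E l"
    using nv_pos[OF l] by simp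
  finally have "complex_of_real (v l $ 0) * E l = complex_of_real (v l $ 6) * exp (\<i> * complex_of_real \<phi>)"
    using a by simp
  hence "norm (complex_of_real (v l $ 0) * E l) = norm (complex_of_real (v l $ 6) * exp (\<i> * complex_of_real \<phi>))"
    by simp
  thus ?thesis unfolding E_def exp_mi by (simp add: norm_mult cis_conv_exp[symmetric])
qed

lemma absy: "j < 7 \<Longrightarrow> \<bar>y j\<bar> = w j"
proof -
  assume j: "j < 7"
  have "v j $ 6 * v j $ 6 = v j $ 0 * v j $ 0" using pst_extract[OF j] by (metis abs_mult_self_eq)
  moreover have "\<bar>y j\<bar> * \<bar>y j\<bar> = w j * w j"
    using nv_pos[OF j] calculation unfolding y_def w_def by (simp add: power2_eq_square abs_mult_self_eq field_simps)
  moreover have "w j \<ge> 0" unfolding w_def using nv_pos[OF j] by simp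
  ultimately show ?thesis using power2_eq_iff_nonneg[of "\<bar>y j\<bar>" "w j"] by (simp add: power2_eq_square)
qed

lemma w_S: "j < 7 \<Longrightarrow> w j = \<bar>y 0\<bar> * \<bar>Sf m j\<bar>"
  using absy[of j] yS[of j] by (simp add: abs_mult)

end

lemma Sf_sign: "Sf m 1 < 0" "Sf m 2 < 0" "Sf m 3 > 0" "Sf m 4 > 0" "Sf m 5 < 0" "Sf m 6 < 0"
  unfolding Sf_simps by (simp_all add: divide_neg_pos divide_pos_pos)

lemma Fz_bracket: "Fz m t = 2 * (4 * real m + 3) * (4 * real m + 5) *
   (1 + 2 * (- Sf m 1) * cos ((2 * real m + 1) * t) + 2 * Sf m 3 * cos ((2 * real m + 2) * t) + 2 * (- Sf m 5) * cos ((2 * real m + 3) * t))"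
proof -
  define K where "K = 2 * (4 * real m + 3) * (4 * real m + 5)"
  have e: "bb m - 1 = 2 * real m + 1" "bb m + 1 = 2 * real m + 3" "bb m = 2 * real m + 2" unfolding bb_def by simp_all
  have d: "4 * real m + 3 \<noteq> 0" "4 * real m + 5 \<noteq> 0" by linarith+
  have d3: "(30::real) + (real m * 64 + real m * (real m * 32)) \<noteq> 0"
    by (rule order.strict_implies_not_eq[symmetric], intro add_pos_nonneg) auto
  have k0: "K = cA (bb m)" unfolding K_def cA_def e by (simp add: algebra_simps power2_eq_square)
  have k1: "K * (2 * (- Sf m 1)) = cE (bb m)" unfolding K_def cE_def e Sf_simps using d
    by (simp add: field_simps power2_eq_square)
  have k3: "K * (2 * Sf m 3) = cal (bb m)" unfolding K_def cal_def e Sf_simps using d d3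
    by (simp add: field_simps power2_eq_square)
  have k5: "K * (2 * (- Sf m 5)) = cD (bb m)" unfolding K_def cD_def e Sf_simps using d
    by (simp add: field_simps power2_eq_square)
  have "K * (1 + 2 * (- Sf m 1) * cos ((2 * real m + 1) * t) + 2 * Sf m 3 * cos ((2 * real m + 2) * t) + 2 * (- Sf m 5) * cos ((2 * real m + 3) * t))
    = K + (K * (2 * (- Sf m 1))) * cos ((2 * real m + 1) * t) + (K * (2 * Sf m 3)) * cos ((2 * real m + 2) * t) + (K * (2 * (- Sf m 5))) * cos ((2 * real m + 3) * t)"
    by (simp only: distrib_left mult.assoc mult_1_right)
  also have "\<dots> = Fz m t" unfolding k1 k3 k5 unfolding k0 unfolding Fz_def e by (simp add: add_ac)
  finally show ?thesis unfolding K_def by simp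
qed


lemma Sf_eq: "Sf m 2 = Sf m 1" "Sf m 4 = Sf m 3" "Sf m 6 = Sf m 5" "Sf m 0 = 1" "Sf m (Suc 0) = Sf m 1"
  by (simp_all add: Sf_def)

context spec7p
begin

lemma w_eq: "w 2 = w 1" "w 4 = w 3" "w 6 = w 5"
  using w_S[of 1] w_S[of 2] w_S[of 3] w_S[of 4] w_S[of 5] w_S[of 6] by (simp_all add: Sf_def)

lemma evol0: "evol J t 0 = complex_of_real (w 0 + 2 * w 1 * cos ((2 * real m + 1) * t) + 2 * w 3 * cos ((2 * real m + 2) * t) + 2 * w 5 * cos ((2 * real m + 3) * t))"
proof -
  have "evol J t 0 = (\<Sum>j<7. complex_of_real (w j) * exp (- \<i> * complex_of_real (lamf m j * t)))"
    using evol_gen[of 0 t] unfolding w_def by (simp add: power2_eq_square)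
  also have "\<dots> = complex_of_real (w 0) + (complex_of_real (w 1) * exp (- \<i> * complex_of_real (lamf m 1 * t)) + complex_of_real (w 1) * exp (- \<i> * complex_of_real ((- lamf m 1) * t)))
     + (complex_of_real (w 3) * exp (- \<i> * complex_of_real (lamf m 3 * t)) + complex_of_real (w 3) * exp (- \<i> * complex_of_real ((- lamf m 3) * t)))
     + (complex_of_real (w 5) * exp (- \<i> * complex_of_real (lamf m 5 * t)) + complex_of_real (w 5) * exp (- \<i> * complex_of_real ((- lamf m 5) * t)))"
    unfolding sum7 w_eq by (simp add: lamf_simps lamf_Suc0 add_ac)
  also have "\<dots> = complex_of_real (w 0 + 2 * w 1 * cos (lamf m 1 * t) + 2 * w 3 * cos (lamf m 3 * t) + 2 * w 5 * cos (lamf m 5 * t))"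
    unfolding exp_pair by simp
  finally show ?thesis by (simp add: lamf_simps lamf_Suc0)
qed

lemma sumS: "\<bar>y 0\<bar> * (1 - 2 * Sf m 1 + 2 * Sf m 3 - 2 * Sf m 5) = 1"
proof -
  have "1 = (\<Sum>j<7. w j)" using sumw by simp
  also have "\<dots> = \<bar>y 0\<bar> * (\<Sum>j<7. \<bar>Sf m j\<bar>)" by (simp add: w_S sum_distrib_left)
  also have "(\<Sum>j<7. \<bar>Sf m j\<bar>) = 1 - 2 * Sf m 1 + 2 * Sf m 3 - 2 * Sf m 5"
    unfolding sum7 Sf_eq using Sf_sign[of m] by simp
  finally show ?thesis by simp
qed

lemma y0_nz: "y 0 \<noteq> 0" using sumS by auto

lemma evol0_zero: "evol J t 0 = 0 \<longleftrightarrow> Fz m t = 0"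
proof -
  define W where "W = w 0 + 2 * w 1 * cos ((2 * real m + 1) * t) + 2 * w 3 * cos ((2 * real m + 2) * t) + 2 * w 5 * cos ((2 * real m + 3) * t)"
  define Br where "Br = 1 + 2 * (- Sf m 1) * cos ((2 * real m + 1) * t) + 2 * Sf m 3 * cos ((2 * real m + 2) * t) + 2 * (- Sf m 5) * cos ((2 * real m + 3) * t)"
  have eq: "W = \<bar>y 0\<bar> * Br" unfolding W_def Br_def
    using w_S[of 0] w_S[of 1] w_S[of 3] w_S[of 5] Sf_sign[of m] Sf_eq(4)[of m] by (simp add: algebra_simps)
  have "evol J t 0 = 0 \<longleftrightarrow> W = 0" unfolding evol0 W_def by (simp only: of_real_eq_0_iff)
  also have "\<dots> \<longleftrightarrow> Br = 0" unfolding eq using y0_nz by simp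
  also have "\<dots> \<longleftrightarrow> Fz m t = 0" unfolding Fz_bracket Br_def[symmetric]
    by (simp del: of_nat_add of_nat_mult)
  finally show ?thesis .
qed

lemma sign_rel: assumes j: "j < 7" shows "v j $ 0 * sgn (Sf m j) = sgn (y 0) * v j $ 6"
proof -
  have S0: "Sf m j \<noteq> 0"
  proof -
    have "j = 0 \<or> j = 1 \<or> j = 2 \<or> j = 3 \<or> j = 4 \<or> j = 5 \<or> j = 6" using j by auto
    thus ?thesis using Sf_sign[of m] Sf_eq(4)[of m] by auto
  qed
  have n: "nv j > 0" by (rule nv_pos[OF j])
  have a: "v j $ 6 * v j $ 0 = y 0 * Sf m j * nv j" using yS[OF j] n unfolding y_def by (simp add: field_simps)
  have b: "v j $ 0 * v j $ 0 = \<bar>y 0\<bar> * \<bar>Sf m j\<bar> * nv j" using w_S[OF j] n unfolding w_def by (simp add: field_simps power2_eq_square)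
  have v0: "v j $ 0 \<noteq> 0" using b y0_nz S0 n by auto
  have "\<bar>y 0\<bar> = sgn (y 0) * y 0" "\<bar>Sf m j\<bar> = sgn (Sf m j) * Sf m j" by (simp_all add: abs_sgn mult.commute)
  hence "v j $ 0 * v j $ 0 = sgn (y 0) * sgn (Sf m j) * (v j $ 6 * v j $ 0)" using a b by (simp add: mult_ac)
  hence "v j $ 0 = sgn (y 0) * sgn (Sf m j) * v j $ 6" using v0 by (simp add: mult_ac)
  hence "v j $ 0 * sgn (Sf m j) = sgn (y 0) * (sgn (Sf m j) * sgn (Sf m j)) * v j $ 6" by (simp add: mult_ac)
  also have "sgn (Sf m j) * sgn (Sf m j) = 1" using S0 by (cases "Sf m j > 0") (auto simp: sgn_if)
  finally show ?thesis by simp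
qed

lemma cis_neg_int: "sin x = 0 \<Longrightarrow> cis (- x) = complex_of_real (cos x)"
  by (simp add: complex_eq_iff)

lemma cis_lam: assumes j: "j < 7" shows "exp (- \<i> * complex_of_real (lamf m j * pi)) = complex_of_real (sgn (Sf m j))"
proof -
  have s: "sin ((2 * real m + 1) * pi) = 0" "sin ((2 * real m + 2) * pi) = 0" "sin ((2 * real m + 3) * pi) = 0"
    using sin_npi[of "2*m+1"] sin_npi[of "2*m+2"] sin_npi[of "2*m+3"] by (simp_all only: of_nat_add of_nat_mult of_nat_numeral of_nat_1)
  have c: "cos ((2 * real m + 1) * pi) = -1" "cos ((2 * real m + 2) * pi) = 1" "cos ((2 * real m + 3) * pi) = -1"
    using cos_npi[of "2*m+1"] cos_npi[of "2*m+2"] cos_npi[of "2*m+3"] by (simp_all only: of_nat_add of_nat_mult of_nat_numeral of_nat_1 negpow)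
  note sg = Sf_sign[of m] Sf_eq(4)[of m]
  have "j = 0 \<or> j = 1 \<or> j = 2 \<or> j = 3 \<or> j = 4 \<or> j = 5 \<or> j = 6" using j by auto
  then show ?thesis
  proof (elim disjE)
    assume "j = 0" thus ?thesis using sg by (simp add: lamf_simps)
  next
    assume jj: "j = 1"
    have L: "lamf m 1 * pi = (2 * real m + 1) * pi" by (simp add: lamf_simps lamf_Suc0)
    have "cis (- (lamf m 1 * pi)) = complex_of_real (cos ((2 * real m + 1) * pi))" unfolding L by (rule cis_neg_int) (simp add: s)
    thus ?thesis unfolding jj exp_mi using sg c by simp
  next
    assume jj: "j = 2"
    have L: "lamf m 2 * pi = - ((2 * real m + 1) * pi)" by (simp add: lamf_simps algebra_simps)
    have "cis (- (lamf m 2 * pi)) = cis ((2 * real m + 1) * pi)" unfolding L by simp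
    also have "\<dots> = cis (- ((2 * real m + 1) * pi))" by (simp add: cis_cnj[symmetric] complex_eq_iff s)
    also have "\<dots> = complex_of_real (cos ((2 * real m + 1) * pi))" by (rule cis_neg_int) (simp add: s)
    finally show ?thesis unfolding jj exp_mi using sg c by simp
  next
    assume jj: "j = 3"
    have L: "lamf m 3 * pi = (2 * real m + 2) * pi" by (simp add: lamf_simps)
    have "cis (- (lamf m 3 * pi)) = complex_of_real (cos ((2 * real m + 2) * pi))" unfolding L by (rule cis_neg_int) (simp add: s)
    thus ?thesis unfolding jj exp_mi using sg c by simp
  next
    assume jj: "j = 4"
    have L: "lamf m 4 * pi = - ((2 * real m + 2) * pi)" by (simp add: lamf_simps algebra_simps)
    have "cis (- (lamf m 4 * pi)) = cis ((2 * real m + 2) * pi)" unfolding L by simp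
    also have "\<dots> = cis (- ((2 * real m + 2) * pi))" by (simp add: cis_cnj[symmetric] complex_eq_iff s)
    also have "\<dots> = complex_of_real (cos ((2 * real m + 2) * pi))" by (rule cis_neg_int) (simp add: s)
    finally show ?thesis unfolding jj exp_mi using sg c by simp
  next
    assume jj: "j = 5"
    have L: "lamf m 5 * pi = (2 * real m + 3) * pi" by (simp add: lamf_simps)
    have "cis (- (lamf m 5 * pi)) = complex_of_real (cos ((2 * real m + 3) * pi))" unfolding L by (rule cis_neg_int) (simp add: s)
    thus ?thesis unfolding jj exp_mi using sg c by simp
  next
    assume jj: "j = 6"
    have L: "lamf m 6 * pi = - ((2 * real m + 3) * pi)" by (simp add: lamf_simps algebra_simps)
    have "cis (- (lamf m 6 * pi)) = cis ((2 * real m + 3) * pi)" unfolding L by simp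
    also have "\<dots> = cis (- ((2 * real m + 3) * pi))" by (simp add: cis_cnj[symmetric] complex_eq_iff s)
    also have "\<dots> = complex_of_real (cos ((2 * real m + 3) * pi))" by (rule cis_neg_int) (simp add: s)
    finally show ?thesis unfolding jj exp_mi using sg c by simp
  qed
qed

lemma pst_pi: "pst_at 7 J pi"
proof -
  have ev: "evol J pi i = complex_of_real (sgn (y 0) * (if i = 6 then 1 else 0))" if i: "i < 7" for i
  proof -
    have "evol J pi i = (\<Sum>j<7. complex_of_real (v j $ i * v j $ 0 / nv j) * exp (- \<i> * complex_of_real (lamf m j * pi)))"
      by (rule evol_gen[OF i])
    also have "\<dots> = (\<Sum>j<7. complex_of_real (v j $ i * v j $ 0 / nv j) * complex_of_real (sgn (Sf m j)))"
      by (intro sum.cong refl) (simp only: cis_lam lessThan_iff)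
    also have "\<dots> = complex_of_real (\<Sum>j<7. v j $ i * (v j $ 0 * sgn (Sf m j)) / nv j)"
      by (simp add: mult_ac)
    also have "(\<Sum>j<7. v j $ i * (v j $ 0 * sgn (Sf m j)) / nv j) = (\<Sum>j<7. sgn (y 0) * (v j $ i * v j $ 6 / nv j))"
    proof (intro sum.cong refl)
      fix j assume "j \<in> {..<7::nat}"
      hence j: "j < 7" by simp
      show "v j $ i * (v j $ 0 * sgn (Sf m j)) / nv j = sgn (y 0) * (v j $ i * v j $ 6 / nv j)"
        unfolding sign_rel[OF j] by simp
    qed
    also have "\<dots> = sgn (y 0) * (\<Sum>j<7. v j $ i * v j $ 6 / nv j)" by (simp add: sum_distrib_left)
    also have "\<dots> = sgn (y 0) * (if i = 6 then 1 else 0)" using complete[OF i, of 6] by simp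
    finally show ?thesis .
  qed
  define \<phi> where "\<phi> = (if y 0 > 0 then 0 else pi)"
  have "exp (\<i> * complex_of_real \<phi>) = complex_of_real (sgn (y 0))"
    using y0_nz unfolding \<phi>_def by (auto simp: cis_conv_exp[symmetric] sgn_if)
  thus ?thesis unfolding pst_at_def using ev by (intro conjI exI[of _ \<phi>]) auto
qed

lemma no_pst: assumes t: "0 < t" "t < pi" shows "\<not> pst_at 7 J t"
proof
  assume p: "pst_at 7 J t"
  then obtain \<phi> where "evol J t 6 = exp (\<i> * complex_of_real \<phi>)"
    unfolding pst_at_def by fastforce
  hence "norm (evol J t 6) = 1" by (simp add: cis_conv_exp[symmetric])
  define X where "X = 1 + 2 * Sf m 1 * cos ((2 * real m + 1) * t) + 2 * Sf m 3 * cos ((2 * real m + 2) * t) + 2 * Sf m 5 * cos ((2 * real m + 3) * t)"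
  have "evol J t 6 = complex_of_real (y 0 * X)"
    unfolding evol6 X_def using yS[of 1] yS[of 3] yS[of 5] by (simp add: algebra_simps)
  hence "norm (complex_of_real (y 0 * X)) = 1" using \<open>norm (evol J t 6) = 1\<close> by simp
  hence "\<bar>y 0 * X\<bar> = 1" by (simp only: norm_of_real)
  hence "\<bar>y 0\<bar> * \<bar>X\<bar> = 1" by (simp only: abs_mult)
  hence aX: "\<bar>X\<bar> = 1 - 2 * Sf m 1 + 2 * Sf m 3 - 2 * Sf m 5" using sumS y0_nz
    by (metis mult_cancel_left abs_eq_0)
  define p where "p = - Sf m 1"
  define q where "q = Sf m 3"
  define r where "r = - Sf m 5"
  define c1 where "c1 = cos ((2 * real m + 1) * t)"
  define c2 where "c2 = cos ((2 * real m + 2) * t)"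
  define c3 where "c3 = cos ((2 * real m + 3) * t)"
  have pqr: "p > 0" "q > 0" "r > 0" unfolding p_def q_def r_def using Sf_sign[of m] by auto
  have X': "X = 1 - 2 * (p * c1) + 2 * (q * c2) - 2 * (r * c3)"
    unfolding X_def p_def q_def r_def c1_def c2_def c3_def by simp
  have aX': "\<bar>X\<bar> = 1 + 2 * p + 2 * q + 2 * r" using aX unfolding p_def q_def r_def by simp
  have cA1: "-1 \<le> c1" "c1 \<le> 1" unfolding c1_def by simp_all
  have cB1: "-1 \<le> c2" "c2 \<le> 1" unfolding c2_def by simp_all
  have cC1: "-1 \<le> c3" "c3 \<le> 1" unfolding c3_def by simp_all
  have l1: "p * c1 \<ge> - p" using mult_left_mono[OF cA1(1), of p] pqr by simp
  have l2: "q * c2 \<le> q" using mult_left_mono[OF cB1(2), of q] pqr by simp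
  have l3: "r * c3 \<ge> - r" using mult_left_mono[OF cC1(1), of r] pqr by simp
  have u1: "p * c1 \<le> p" using mult_left_mono[OF cA1(2), of p] pqr by simp
  have u2: "q * c2 \<ge> - q" using mult_left_mono[OF cB1(1), of q] pqr by simp
  have u3: "r * c3 \<le> r" using mult_left_mono[OF cC1(2), of r] pqr by simp
  have "X = 1 + 2 * p + 2 * q + 2 * r"
  proof (cases "X \<ge> 0")
    case True thus ?thesis using aX' by simp
  next
    case False
    hence "- X = 1 + 2 * p + 2 * q + 2 * r" using aX' by simp
    thus ?thesis using X' u1 u2 u3 pqr by linarith
  qed
  hence e1: "p * c1 = - p" and e2: "q * c2 = q"
    using X' l1 l2 l3 by linarith+
  have ca: "cos ((2 * real m + 1) * t) = -1" using e1 pqr unfolding c1_def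
    by (metis mult_minus1_right mult_left_cancel less_irrefl)
  have cb: "cos ((2 * real m + 2) * t) = 1" using e2 pqr unfolding c2_def
    by (metis mult_1_right mult_left_cancel less_irrefl)
  have sb: "sin ((2 * real m + 2) * t) = 0" using cb sin_cos_squared_add[of "(2 * real m + 2) * t"] by simp
  have "cos t = cos ((2 * real m + 2) * t - (2 * real m + 1) * t)" by (simp add: algebra_simps)
  also have "\<dots> = -1" unfolding cos_diff ca cb sb by simp
  finally have "cos t = -1" .
  moreover have "cos pi < cos t" using t by (intro cos_monotone_0_pi) auto
  ultimately show False by simp
qed

end

theorem theorem3p4:
  fixes m :: nat and J :: "real mat"
  assumes "m \<ge> 1"
    and "jacobi_matrix 7 J"
    and "realizes_pst 7 J"
    and "spectrum J = {0, real (2*m+1), - real (2*m+1), real (2*m+2), - real (2*m+2),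
                       real (2*m+3), - real (2*m+3)}"
  shows "(\<exists>T. earliest_pst_time 7 J T) \<and>
         (\<forall>T. earliest_pst_time 7 J T \<longrightarrow> card (ese_times 7 J T) = 2 * m)"
proof -
  note jac = assms(2)
  have carr: "J \<in> carrier_mat 7 7" using jac unfolding jacobi_matrix_def by auto
  have sym: "\<And>i j. i < 7 \<Longrightarrow> j < 7 \<Longrightarrow> J $$ (i,j) = J $$ (j,i)" using jac unfolding jacobi_matrix_def by auto
  have ev: "eigenvalue J (lamf m j)" if "j < 7" for j
  proof -
    have "lamf m j \<in> spectrum J" unfolding assms(4) using that by (auto simp: lamf_def)
    thus ?thesis unfolding spectrum_def by simp
  qed
  have "\<forall>j. \<exists>vv. j < 7 \<longrightarrow> eigenvector J vv (lamf m j)"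
    using ev unfolding eigenvalue_def by blast
  then obtain v where v: "\<And>j. j < 7 \<Longrightarrow> eigenvector J (v j) (lamf m j)" by metis
  have dist: "\<And>j k. j < 7 \<Longrightarrow> k < 7 \<Longrightarrow> j \<noteq> k \<Longrightarrow> lamf m j \<noteq> lamf m k"
  proof -
    fix j k :: nat assume jk: "j < 7" "k < 7" "j \<noteq> k"
    have M: "real m \<ge> 0" by simp
    have "j = 0 \<or> j = 1 \<or> j = 2 \<or> j = 3 \<or> j = 4 \<or> j = 5 \<or> j = 6" using jk by auto
    moreover have "k = 0 \<or> k = 1 \<or> k = 2 \<or> k = 3 \<or> k = 4 \<or> k = 5 \<or> k = 6" using jk by auto
    ultimately show "lamf m j \<noteq> lamf m k" using jk M by (auto simp: lamf_def)
  qed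
  have band6: "\<And>k. k < 6 \<Longrightarrow> (J ^\<^sub>m k) $$ (6,0) = 0"
    using band[OF jac] by simp
  obtain T0 where T0: "pst_at 7 J T0" using assms(3) unfolding realizes_pst_def by auto
  interpret S: spec7p J v m T0
    by unfold_locales (use carr sym v dist band6 T0 in auto)
  have ear: "earliest_pst_time 7 J pi"
    unfolding earliest_pst_time_def using S.pst_pi S.no_pst by auto
  have uniq: "T = pi" if "earliest_pst_time 7 J T" for T
  proof -
    have pT: "pst_at 7 J T" "\<And>t. 0 < t \<and> t < T \<longrightarrow> \<not> pst_at 7 J t"
      using that unfolding earliest_pst_time_def by auto
    have T0': "T > 0" using pT(1) unfolding pst_at_def by auto
    show ?thesis
    proof (rule ccontr)
      assume "T \<noteq> pi"
      hence "T < pi \<or> T > pi" by auto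
      thus False
      proof
        assume "T < pi" thus False using S.no_pst[of T] T0' pT(1) by auto
      next
        assume "T > pi" thus False using pT(2)[of pi] S.pst_pi by auto
      qed
    qed
  qed
  have "ese_times 7 J pi = {t. 0 < t \<and> t < pi \<and> Fz m t = 0}"
    unfolding ese_times_def using S.evol0_zero by auto
  hence "card (ese_times 7 J pi) = 2 * m" using zero_count[OF assms(1)] by simp
  thus ?thesis using ear uniq by auto
qed

end
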